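(* Let $\xi$ take values $0$ and $2$ with probability $1/2$ each, let $k \ge 1$, and let $p \in (0,1)$. Let $F_n$ be the Boolean function computed at the root of $T_n$, for odd $n$. Then $F_n$ converges in distribution, as $n \to \infty$ along odd $n$, to a random Boolean function $F_\infty$ of $x_1,\dots,x_k$. Moreover, every Boolean function of $x_1,\dots,x_k$ has positive probability under the law of $F_\infty$.
   Context: $T_n$ is a Galton--Watson tree with offspring distribution $\xi$ conditioned to have exactly $n$ nodes; it is a binary tree, defined for odd $n$. Each internal node is independently an AND-node with probability $p$ or an OR-node with probability $1-p$. Each leaf independently receives a literal chosen uniformly among the $2k$ literals $x_1,\dots,x_k,\bar x_1,\dots,\bar x_k$. The value of a leaf is the Boolean function given by its literal. An AND-node (resp. OR-node) takes the Boolean AND (resp. OR) of the functions at its two children. The values thus lie in the finite set of Boolean functions of $x_1,\dots,x_k$. *)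

theory Defs
  imports "HOL-Probability.Probability"
begin

text \<open>Plane trees in the support of the offspring law xi (0 or 2 children).\<close>
datatype fbt = Lf | Nd fbt fbt

fun nodes :: "fbt \<Rightarrow> nat" where
  "nodes Lf = 1"
| "nodes (Nd l r) = 1 + nodes l + nodes r"

definition xi :: "nat \<Rightarrow> real" where
  "xi j = (if j = 0 \<or> j = 2 then 1/2 else 0)"

fun gw_weight :: "fbt \<Rightarrow> real" where
  "gw_weight Lf = xi 0"
| "gw_weight (Nd l r) = xi 2 * gw_weight l * gw_weight r"

definition T :: "nat \<Rightarrow> fbt pmf" where
  "T n = embed_pmf (\<lambda>t. if nodes t = n
        then gw_weight t / (\<Sum>s\<in>{s. nodes s = n}. gw_weight s) else 0)"

text \<open>A Boolean function of x_1..x_k is represented by its truth table: the set of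
  assignments (an assignment = the set of indices in {0..<k} of variables set true)
  on which it is true.\<close>
definition boolfuns :: "nat \<Rightarrow> nat set set set" where
  "boolfuns k = Pow (Pow {..<k})"

text \<open>Literal (i, True) is x_(i+1), (i, False) its negation.\<close>
definition lit :: "nat \<Rightarrow> nat \<times> bool \<Rightarrow> nat set set" where
  "lit k l = {A \<in> Pow {..<k}. (fst l \<in> A) = snd l}"

fun val_pmf :: "nat \<Rightarrow> real \<Rightarrow> fbt \<Rightarrow> nat set set pmf" where
  "val_pmf k p Lf = map_pmf (lit k) (pmf_of_set ({..<k} \<times> (UNIV :: bool set)))"
| "val_pmf k p (Nd l r) =
     bind_pmf (bernoulli_pmf p) (\<lambda>isand.
     bind_pmf (val_pmf k p l) (\<lambda>f.
     bind_pmf (val_pmf k p r) (\<lambda>g.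
     return_pmf (if isand then f \<inter> g else f \<union> g))))"

definition F_law :: "nat \<Rightarrow> real \<Rightarrow> nat \<Rightarrow> nat set set pmf" where
  "F_law k p n = bind_pmf (T n) (val_pmf k p)"

end

theory Submission
  imports Defs "HOL-Computational_Algebra.Formal_Power_Series" "HOL-Real_Asymp.Real_Asymp"
begin

definition S :: "nat \<Rightarrow> fbt set" where "S n = {s. nodes s = 2*n+1}"
definition c :: "nat \<Rightarrow> nat" where "c n = card (S n)"

lemma nodes_odd: "odd (nodes s)"
  by (induction s) auto

lemma nodes_ge1: "nodes s \<ge> 1"
  by (cases s) auto

lemma finite_nodes_le: "finite {s. nodes s \<le> m}"
proof (induction m)
  case 0
  have "nodes s \<noteq> 0" for s using nodes_ge1[of s] by simp
  then have "{s. nodes s \<le> 0} = {}" by auto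
  then show ?case by (simp only: finite.emptyI)
next
  case (Suc m)
  have "{s. nodes s \<le> Suc m} \<subseteq> insert Lf ((\<lambda>(l,r). Nd l r) ` ({s. nodes s \<le> m} \<times> {s. nodes s \<le> m}))"
  proof
    fix s assume "s \<in> {s. nodes s \<le> Suc m}"
    then show "s \<in> insert Lf ((\<lambda>(l,r). Nd l r) ` ({s. nodes s \<le> m} \<times> {s. nodes s \<le> m}))"
      by (cases s) force+
  qed
  moreover have "finite (insert Lf ((\<lambda>(l,r). Nd l r) ` ({s. nodes s \<le> m} \<times> {s. nodes s \<le> m})))"
    using Suc by auto
  ultimately show ?case by (rule finite_subset)
qed

lemma finite_S: "finite (S n)"
  unfolding S_def by (rule finite_subset[OF _ finite_nodes_le[of "2*n+1"]]) auto

lemma S0: "S 0 = {Lf}"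
proof -
  have "nodes s = 1 \<longleftrightarrow> s = Lf" for s
  proof (cases s)
    case (Nd a b) then show ?thesis using nodes_ge1[of a] by simp
  qed simp
  then show ?thesis unfolding S_def by auto
qed

lemma S_Suc: "S (Suc n) = (\<lambda>(i,l,r). Nd l r) ` (SIGMA i:{..n}. S i \<times> S (n-i))"
proof
  show "(\<lambda>(i,l,r). Nd l r) ` (SIGMA i:{..n}. S i \<times> S (n-i)) \<subseteq> S (Suc n)"
    by (auto simp: S_def)
next
  show "S (Suc n) \<subseteq> (\<lambda>(i,l,r). Nd l r) ` (SIGMA i:{..n}. S i \<times> S (n-i))"
  proof
    fix s assume s: "s \<in> S (Suc n)"
    then obtain l r where lr: "s = Nd l r" by (cases s) (auto simp: S_def)
    have sz: "nodes l + nodes r = 2*n+2" using s lr by (auto simp: S_def)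
    obtain i where i: "nodes l = 2*i+1" using nodes_odd[of l] by (metis oddE)
    obtain j where j: "nodes r = 2*j+1" using nodes_odd[of r] by (metis oddE)
    have "i + j = n" using sz i j by simp
    then have "(i,l,r) \<in> (SIGMA i:{..n}. S i \<times> S (n-i))" using i j by (auto simp: S_def)
    then show "s \<in> (\<lambda>(i,l,r). Nd l r) ` (SIGMA i:{..n}. S i \<times> S (n-i))" using lr by force
  qed
qed

lemma inj_S_Suc: "inj_on (\<lambda>(i,l,r). Nd l r) (SIGMA i:{..n}. S i \<times> S (n-i))"
  by (auto simp: inj_on_def S_def)

lemma sum_S_Suc:
  fixes G :: "fbt \<Rightarrow> 'a::comm_monoid_add"
  shows "(\<Sum>s\<in>S (Suc n). G s) = (\<Sum>i\<le>n. \<Sum>l\<in>S i. \<Sum>r\<in>S (n-i). G (Nd l r))"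
proof -
  have "(\<Sum>s\<in>S (Suc n). G s) = (\<Sum>x\<in>(SIGMA i:{..n}. S i \<times> S (n-i)). G ((\<lambda>(i,l,r). Nd l r) x))"
    unfolding S_Suc by (rule sum.reindex[OF inj_S_Suc, unfolded comp_def])
  also have "\<dots> = (\<Sum>(i,lr)\<in>(SIGMA i:{..n}. S i \<times> S (n-i)). G (Nd (fst lr) (snd lr)))"
    by (intro sum.cong refl) auto
  also have "\<dots> = (\<Sum>i\<le>n. \<Sum>lr\<in>S i \<times> S (n-i). G (Nd (fst lr) (snd lr)))"
    by (subst sum.Sigma) (auto simp: finite_S)
  also have "\<dots> = (\<Sum>i\<le>n. \<Sum>l\<in>S i. \<Sum>r\<in>S (n-i). G (Nd l r))"
    by (intro sum.cong refl) (simp add: sum.cartesian_product split_def)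
  finally show ?thesis .
qed

lemma c0: "c 0 = 1" by (simp add: c_def S0)

lemma c_Suc: "c (Suc n) = (\<Sum>i\<le>n. c i * c (n-i))"
proof -
  have "c (Suc n) = (\<Sum>s\<in>S (Suc n). 1)" by (simp add: c_def)
  also have "\<dots> = (\<Sum>i\<le>n. \<Sum>l\<in>S i. \<Sum>r\<in>S (n-i). 1)" by (rule sum_S_Suc)
  also have "\<dots> = (\<Sum>i\<le>n. c i * c (n-i))" by (simp add: c_def)
  finally show ?thesis .
qed

lemma c_pos: "c n > 0"
proof (induction n)
  case 0 then show ?case by (simp add: c0)
next
  case (Suc n)
  have "c 0 * c n > 0" using Suc c0 by simp
  moreover have "c 0 * c n \<le> (\<Sum>i\<le>n. c i * c (n-i))"
    by (rule member_le_sum[where f="\<lambda>i. c i * c (n-i)" and i=0, simplified]) auto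
  ultimately show ?case by (simp only: c_Suc)
qed

definition Dp :: "real fps" where "Dp = Abs_fps (\<lambda>n. real (c n))"

lemma Dp_eq: "Dp = 1 + fps_X * Dp^2"
proof (rule fps_ext)
  fix n show "fps_nth Dp n = fps_nth (1 + fps_X * Dp^2) n"
  proof (cases n)
    case 0 then show ?thesis by (simp add: Dp_def c0)
  next
    case (Suc m)
    have "fps_nth (Dp^2) m = (\<Sum>i=0..m. real (c i) * real (c (m-i)))"
      by (simp add: power2_eq_square fps_mult_nth Dp_def)
    also have "\<dots> = real (c (Suc m))" by (simp add: c_Suc atLeast0AtMost)
    finally show ?thesis using Suc by (simp add: Dp_def)
  qed
qed

lemma Dp_ode: "fps_X * (1 - 4*fps_X) * fps_deriv Dp = 1 - Dp + 2*fps_X*Dp"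
proof -
  define E where "E = 1 - 2*fps_X*Dp"
  have d: "fps_deriv Dp = Dp^2 + 2*fps_X*Dp*fps_deriv Dp"
    by (subst Dp_eq) (simp add: power2_eq_square algebra_simps)
  have e1: "E * fps_deriv Dp = Dp^2" using d unfolding E_def by (simp add: algebra_simps)
  have xd: "fps_X * Dp^2 = Dp - 1" by (metis Dp_eq add_diff_cancel_left')
  have e2: "E^2 = 1 - 4*fps_X"
  proof -
    have "E^2 = 1 - 4*fps_X*Dp + 4*(fps_X*Dp^2)*fps_X" unfolding E_def by (simp add: power2_eq_square algebra_simps)
    also have "\<dots> = 1 - 4*fps_X" by (simp add: xd algebra_simps)
    finally show ?thesis .
  qed
  have "fps_X * E * (E * fps_deriv Dp) = fps_X * E^2 * fps_deriv Dp"
    by (simp add: power2_eq_square algebra_simps)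
  moreover have "fps_X * (1 - 4*fps_X) * fps_deriv Dp = fps_X * E^2 * fps_deriv Dp"
    by (simp only: e2)
  ultimately have "fps_X * (1 - 4*fps_X) * fps_deriv Dp = fps_X * E * (E * fps_deriv Dp)"
    by metis
  also have "\<dots> = E * (fps_X * Dp^2)" by (simp add: e1 algebra_simps)
  also have "\<dots> = (1 - 2*fps_X*Dp) * (Dp - 1)" by (simp add: xd E_def)
  also have "\<dots> = Dp - 1 - 2*(fps_X*Dp^2) + 2*fps_X*Dp" by (simp add: power2_eq_square algebra_simps)
  also have "\<dots> = 1 - Dp + 2*fps_X*Dp" by (simp add: xd algebra_simps)
  finally show ?thesis .
qed

lemma c_ratio: "real (n+2) * real (c (Suc n)) = real (4*n+2) * real (c n)"
proof -
  have "fps_nth (fps_X * (1 - 4*fps_X) * fps_deriv Dp) (Suc n) = fps_nth (1 - Dp + 2*fps_X*Dp) (Suc n)"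
    by (simp add: Dp_ode)
  then show ?thesis
    by (cases n) (auto simp: algebra_simps Dp_def)
qed

definition q :: "nat \<Rightarrow> real" where "q n = real (c n) / 4^n"

lemma q0: "q 0 = 1" by (simp add: q_def c0)

lemma q_Suc: "q (Suc n) = q n * (2*n+1) / (2*n+4)"
proof -
  have h: "real (c (Suc n)) = real (c n) * real (2*(2*n+1)) / real (n+2)"
    using c_ratio[of n] by (simp add: field_simps)
  have d1: "real (n+2) * (4 * 4^n) \<noteq> 0" by simp
  have d2: "(4::real)^n * real (2*n+4) \<noteq> 0" by simp
  have "real (c n) * real (2*(2*n+1)) / (real (n+2) * (4 * 4^n)) = real (c n) * real (2*n+1) / (4^n * real (2*n+4))"
    by (subst frac_eq_eq[OF d1 d2]) (simp add: algebra_simps)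
  then show ?thesis unfolding q_def h power_Suc
    by (simp only: divide_divide_eq_left times_divide_eq_left)
qed

lemma q_pos: "q n > 0" using c_pos[of n] by (simp add: q_def)

lemma q_partial: "(\<Sum>i\<le>M. q i) = 2 - 2 * (M+2) * q (Suc M)"
proof (induction M)
  case 0 then show ?case by (simp add: q_Suc q0)
next
  case (Suc M)
  have "(\<Sum>i\<le>Suc M. q i) = 2 - 2 * (M+2) * q (Suc M) + q (Suc M)" using Suc by simp
  also have "\<dots> = 2 - 2 * (Suc M + 2) * q (Suc (Suc M))"
    by (simp add: q_Suc[of "Suc M"] field_simps)
  finally show ?case by simp
qed

definition rho :: "nat \<Rightarrow> real" where "rho m = (m+1) * q m"

lemma rho_sq: "rho m ^ 2 * (2*m+1) \<le> 1"
proof (induction m)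
  case 0 then show ?case by (simp add: rho_def q0)
next
  case (Suc m)
  define x where "x = rho m ^ 2 * (2*m+1)"
  define z where "z = (2*real m+1)*(2*m+3)"
  define y where "y = z / (2*real m+2)^2"
  have r: "rho (Suc m) = rho m * (2*m+1) / (2*m+2)"
    unfolding rho_def q_Suc by (simp add: field_simps)
  have eq: "(2*real m+2)^2 = z + 1" unfolding z_def by (simp add: power2_eq_square algebra_simps)
  have z0: "z \<ge> 0" unfolding z_def by simp
  have y1: "y \<le> 1" unfolding y_def eq using z0 by simp
  have y0: "0 \<le> y" unfolding y_def using z0 by simp
  have x1: "x \<le> 1" using Suc by (simp add: x_def)
  have "rho (Suc m) ^ 2 * (2 * Suc m + 1) = x * y"
    unfolding r x_def y_def z_def by (simp add: power2_eq_square field_simps)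
  also have "\<dots> \<le> 1 * 1" by (rule mult_mono[OF x1 y1]) (simp_all add: y0)
  finally show ?case by simp
qed

lemma rho_lim: "rho \<longlonglongrightarrow> 0"
proof -
  have nn: "rho m \<ge> 0" for m using q_pos[of m] by (simp add: rho_def)
  have "(\<lambda>m. rho m ^ 2) \<longlonglongrightarrow> 0"
  proof (rule tendsto_sandwich[of "\<lambda>_. 0" _ _ "\<lambda>m. 1 / (2 * real m + 1)"])
    show "\<forall>\<^sub>F n in sequentially. 0 \<le> rho n ^ 2" by simp
    show "\<forall>\<^sub>F n in sequentially. rho n ^ 2 \<le> 1 / (2 * real n + 1)"
      using rho_sq by (simp add: field_simps)
    show "(\<lambda>m. 1 / (2 * real m + 1)) \<longlonglongrightarrow> 0" by real_asymp
  qed simp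
  then have "(\<lambda>m. sqrt (rho m ^ 2)) \<longlonglongrightarrow> sqrt 0" by (rule tendsto_real_sqrt)
  then show ?thesis using nn by simp
qed

definition w :: "nat \<Rightarrow> real" where "w i = real (c i) / 4^(Suc i)"

lemma w_q: "w i = q i / 4" by (simp add: w_def q_def)

lemma w_sum_lim: "(\<lambda>M. \<Sum>i\<le>M. w i) \<longlonglongrightarrow> 1/2"
proof -
  have e: "(\<Sum>i\<le>M. w i) = (2 - 2 * rho (Suc M)) / 4" for M
  proof -
    have "(\<Sum>i\<le>M. w i) = (\<Sum>i\<le>M. q i) / 4" by (simp add: w_q sum_divide_distrib)
    also have "\<dots> = (2 - 2 * rho (Suc M)) / 4" by (simp add: q_partial rho_def)
    finally show ?thesis .
  qed
  have r: "(\<lambda>M. rho (Suc M)) \<longlonglongrightarrow> 0" by (rule LIMSEQ_Suc[OF rho_lim])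
  have "(\<lambda>M. (2 - 2 * rho (Suc M)) / 4) \<longlonglongrightarrow> (2 - 2 * 0) / 4"
    by (intro tendsto_divide tendsto_diff tendsto_mult tendsto_const r) simp
  then show ?thesis by (simp add: e)
qed

lemma w_pos: "w i > 0" using c_pos[of i] by (simp add: w_def)

lemma w1: "w 1 = 1/16"
proof -
  have "c (Suc 0) = 1" using c_Suc[of 0] c0 by simp
  then show ?thesis by (simp add: w_def)
qed

lemma ratio_lim: "(\<lambda>m. real (c m) / real (c (Suc m))) \<longlonglongrightarrow> 1/4"
proof -
  have e: "real (c m) / real (c (Suc m)) = real (m+2) / real (4*m+2)" for m
    using c_ratio[of m] c_pos[of m] c_pos[of "Suc m"] by (simp add: field_simps)
  have "(\<lambda>m::nat. real (m+2) / real (4*m+2)) \<longlonglongrightarrow> 1/4" by real_asymp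
  then show ?thesis by (simp add: e)
qed

lemma shift_lim:
  assumes "f \<longlonglongrightarrow> l"
  shows "(\<lambda>n. f (n - k)) \<longlonglongrightarrow> l"
  by (rule LIMSEQ_offset[where k=k]) (simp add: assms)

lemma cratio_lim: "(\<lambda>n. real (c (n - i)) / real (c (Suc n))) \<longlonglongrightarrow> (1/4)^(Suc i)"
proof (induction i)
  case 0 then show ?case using ratio_lim by simp
next
  case (Suc i)
  have "(\<lambda>n. real (c (n - Suc i)) / real (c (Suc (n - Suc i))) * (real (c (n - i)) / real (c (Suc n))))
        \<longlonglongrightarrow> 1/4 * (1/4)^(Suc i)"
    by (intro tendsto_mult Suc shift_lim[OF ratio_lim])
  moreover have "\<forall>\<^sub>F n in sequentially.
      real (c (n - Suc i)) / real (c (Suc (n - Suc i))) * (real (c (n - i)) / real (c (Suc n)))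
      = real (c (n - Suc i)) / real (c (Suc n))"
  proof (rule eventually_sequentiallyI[of "Suc i"])
    fix n assume "Suc i \<le> n"
    then have "Suc (n - Suc i) = n - i" by simp
    then show "real (c (n - Suc i)) / real (c (Suc (n - Suc i))) * (real (c (n - i)) / real (c (Suc n)))
      = real (c (n - Suc i)) / real (c (Suc n))" using c_pos[of "n-i"] by simp
  qed
  ultimately have "(\<lambda>n. real (c (n - Suc i)) / real (c (Suc n))) \<longlonglongrightarrow> 1/4 * (1/4)^(Suc i)"
    by (rule Lim_transform_eventually)
  then show ?case by simp
qed

definition a :: "nat \<Rightarrow> nat \<Rightarrow> real" where "a n i = real (c i) * real (c (n - i)) / real (c (Suc n))"

lemma a_lim: "(\<lambda>n. a n i) \<longlonglongrightarrow> w i"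
proof -
  have "(\<lambda>n. real (c i) * (real (c (n - i)) / real (c (Suc n)))) \<longlonglongrightarrow> real (c i) * (1/4)^(Suc i)"
    by (intro tendsto_mult tendsto_const cratio_lim)
  then show ?thesis by (simp add: a_def w_def power_one_over)
qed

lemma a_sum: "(\<Sum>i\<le>n. a n i) = 1"
proof -
  have e: "real (c (Suc n)) = (\<Sum>i\<le>n. real (c i) * real (c (n-i)))" by (simp add: c_Suc)
  show ?thesis unfolding a_def sum_divide_distrib[symmetric] e[symmetric] using c_pos[of "Suc n"] by simp
qed

lemma a_sym: "i \<le> n \<Longrightarrow> a n (n - i) = a n i"
  by (simp add: a_def)

lemma a_nn: "a n i \<ge> 0" by (simp add: a_def)

lemma embed_pmf_pmf': "embed_pmf (pmf M) = M"
  by (rule type_definition.Rep_inverse[OF td_pmf_embed_pmf])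

lemma pmf_embed_pmf':
  assumes "\<And>x. 0 \<le> f x" "(\<integral>\<^sup>+x. ennreal (f x) \<partial>count_space UNIV) = 1"
  shows "pmf (embed_pmf f) = f"
  by (rule type_definition.Abs_inverse[OF td_pmf_embed_pmf]) (use assms in auto)

lemma gw_weight_eq: "gw_weight s = (1/2)^(nodes s)"
  by (induction s) (auto simp: xi_def power_add)

lemma T_eq: "T (2*n+1) = pmf_of_set (S n)"
proof -
  have ne: "S n \<noteq> {}" using c_pos[of n] by (auto simp: c_def)
  have sw: "(\<Sum>s\<in>{s. nodes s = 2*n+1}. gw_weight s) = real (c n) * (1/2)^(2*n+1)"
    by (simp add: gw_weight_eq c_def S_def)
  have "(\<lambda>t. if nodes t = 2*n+1 then gw_weight t / (\<Sum>s\<in>{s. nodes s = 2*n+1}. gw_weight s) else 0)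
        = pmf (pmf_of_set (S n))"
  proof
    fix t show "(if nodes t = 2*n+1 then gw_weight t / (\<Sum>s\<in>{s. nodes s = 2*n+1}. gw_weight s) else 0)
        = pmf (pmf_of_set (S n)) t"
      using c_pos[of n] ne finite_S[of n]
      by (simp add: sw gw_weight_eq S_def c_def[symmetric] indicator_def)
  qed
  then show ?thesis unfolding T_def by (simp add: embed_pmf_pmf')
qed

lemma pmf_bind_fin:
  assumes "finite A" "set_pmf M \<subseteq> A"
  shows "pmf (bind_pmf M F) x = (\<Sum>y\<in>A. pmf M y * pmf (F y) x)"
  unfolding pmf_bind using assms
  by (subst integral_measure_pmf_real[where A=A]) (auto simp: mult.commute)

definition Top :: "nat \<Rightarrow> nat set set" where "Top k = Pow {..<k}"

definition phi :: "real \<Rightarrow> nat set set \<Rightarrow> nat set set \<Rightarrow> nat set set \<Rightarrow> real" where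
  "phi p g h f = p * (if g \<inter> h = f then 1 else 0) + (1-p) * (if g \<union> h = f then 1 else 0)"

definition Phi :: "nat \<Rightarrow> real \<Rightarrow> (nat set set \<Rightarrow> real) \<Rightarrow> (nat set set \<Rightarrow> real) \<Rightarrow> nat set set \<Rightarrow> real" where
  "Phi k p u v f = (\<Sum>g\<in>boolfuns k. \<Sum>h\<in>boolfuns k. u g * v h * phi p g h f)"

lemma finite_boolfuns: "finite (boolfuns k)" by (simp add: boolfuns_def)

lemma lit_in: "lit k l \<in> boolfuns k" by (auto simp: lit_def boolfuns_def)

lemma set_val: "k \<ge> 1 \<Longrightarrow> set_pmf (val_pmf k p s) \<subseteq> boolfuns k"
proof (induction s)
  case Lf
  have "finite ({..<k} \<times> (UNIV::bool set))" "{..<k} \<times> (UNIV::bool set) \<noteq> {}" using Lf by (auto simp: lessThan_empty_iff)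
  then show ?case using lit_in by auto
next
  case (Nd l r)
  then show ?case by (auto simp: set_bind_pmf boolfuns_def split: if_split_asm; blast)
qed

lemma pmf_val_Nd:
  assumes "k \<ge> 1" "0 \<le> p" "p \<le> 1"
  shows "pmf (val_pmf k p (Nd l r)) f = Phi k p (pmf (val_pmf k p l)) (pmf (val_pmf k p r)) f"
proof -
  let ?B = "boolfuns k"
  let ?vl = "pmf (val_pmf k p l)" and ?vr = "pmf (val_pmf k p r)"
  define X where "X b = pmf (bind_pmf (val_pmf k p l) (\<lambda>f. bind_pmf (val_pmf k p r) (\<lambda>g.
     return_pmf (if b then f \<inter> g else f \<union> g)))) f" for b
  have X: "X b = (\<Sum>g\<in>?B. ?vl g * (\<Sum>h\<in>?B. ?vr h * (if (if b then g \<inter> h else g \<union> h) = f then 1 else 0)))" for b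
    unfolding X_def
    by (subst pmf_bind_fin[OF finite_boolfuns set_val[OF assms(1)]],
        intro sum.cong refl, subst pmf_bind_fin[OF finite_boolfuns set_val[OF assms(1)]])
       (simp add: indicator_def of_bool_def)
  have "pmf (val_pmf k p (Nd l r)) f = (\<Sum>b\<in>UNIV. pmf (bernoulli_pmf p) b * X b)"
    unfolding X_def by (simp only: val_pmf.simps, subst pmf_bind_fin[where A=UNIV]) auto
  also have "\<dots> = p * X True + (1-p) * X False"
    using assms by (simp add: UNIV_bool)
  also have "\<dots> = Phi k p ?vl ?vr f"
    unfolding X Phi_def phi_def
    by (simp add: sum_distrib_left sum.distrib[symmetric] algebra_simps)
  finally show ?thesis .
qed

definition mu :: "nat \<Rightarrow> real \<Rightarrow> nat \<Rightarrow> nat set set \<Rightarrow> real" where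
  "mu k p n = pmf (F_law k p (2*n+1))"

definition U :: "nat \<Rightarrow> real \<Rightarrow> nat \<Rightarrow> nat set set \<Rightarrow> real" where
  "U k p n f = (\<Sum>s\<in>S n. pmf (val_pmf k p s) f)"

lemma S_ne: "S n \<noteq> {}" using c_pos[of n] finite_S[of n] by (auto simp: c_def)

lemma mu_U: "mu k p n f = U k p n f / real (c n)"
proof -
  have "mu k p n f = (\<Sum>s\<in>S n. pmf (pmf_of_set (S n)) s * pmf (val_pmf k p s) f)"
    unfolding mu_def F_law_def T_eq
    by (rule pmf_bind_fin) (use finite_S[of n] c_pos[of n] in \<open>auto simp: c_def card_gt_0_iff\<close>)
  also have "\<dots> = U k p n f / real (c n)"
    using finite_S[of n] S_ne[of n] by (auto simp: U_def c_def sum_divide_distrib intro!: sum.cong)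
  finally show ?thesis .
qed

lemma Phi_bilin_sum:
  assumes "finite I" "finite J"
  shows "Phi k p (\<lambda>g. \<Sum>i\<in>I. u i g) (\<lambda>h. \<Sum>j\<in>J. v j h) f = (\<Sum>i\<in>I. \<Sum>j\<in>J. Phi k p (u i) (v j) f)"
proof -
  let ?B = "boolfuns k"
  have pr: "(\<Sum>i\<in>I. u i g) * (\<Sum>j\<in>J. v j h) * x = (\<Sum>i\<in>I. \<Sum>j\<in>J. u i g * v j h * x)" for g h x
    unfolding sum_product by (simp add: sum_distrib_right)
  have "Phi k p (\<lambda>g. \<Sum>i\<in>I. u i g) (\<lambda>h. \<Sum>j\<in>J. v j h) f
      = (\<Sum>g\<in>?B. \<Sum>h\<in>?B. \<Sum>i\<in>I. \<Sum>j\<in>J. u i g * v j h * phi p g h f)"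
    unfolding Phi_def pr ..
  also have "\<dots> = (\<Sum>g\<in>?B. \<Sum>i\<in>I. \<Sum>h\<in>?B. \<Sum>j\<in>J. u i g * v j h * phi p g h f)"
    by (rule sum.cong[OF refl], rule sum.swap)
  also have "\<dots> = (\<Sum>i\<in>I. \<Sum>g\<in>?B. \<Sum>h\<in>?B. \<Sum>j\<in>J. u i g * v j h * phi p g h f)"
    by (rule sum.swap)
  also have "\<dots> = (\<Sum>i\<in>I. \<Sum>g\<in>?B. \<Sum>j\<in>J. \<Sum>h\<in>?B. u i g * v j h * phi p g h f)"
    by (rule sum.cong[OF refl], rule sum.cong[OF refl], rule sum.swap)
  also have "\<dots> = (\<Sum>i\<in>I. \<Sum>j\<in>J. \<Sum>g\<in>?B. \<Sum>h\<in>?B. u i g * v j h * phi p g h f)"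
    by (rule sum.cong[OF refl], rule sum.swap)
  also have "\<dots> = (\<Sum>i\<in>I. \<Sum>j\<in>J. Phi k p (u i) (v j) f)"
    unfolding Phi_def ..
  finally show ?thesis .
qed

lemma Phi_scale: "Phi k p (\<lambda>g. x * u g) (\<lambda>h. y * v h) f = x * y * Phi k p u v f"
  unfolding Phi_def by (simp add: sum_distrib_left algebra_simps)

lemma U_Suc:
  assumes "k \<ge> 1" "0 \<le> p" "p \<le> 1"
  shows "U k p (Suc n) f = (\<Sum>i\<le>n. Phi k p (U k p i) (U k p (n-i)) f)"
proof -
  have Ue: "U k p j = (\<lambda>g. \<Sum>s\<in>S j. pmf (val_pmf k p s) g)" for j by (rule ext) (simp add: U_def)
  have "U k p (Suc n) f = (\<Sum>i\<le>n. \<Sum>l\<in>S i. \<Sum>r\<in>S (n-i). pmf (val_pmf k p (Nd l r)) f)"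
    unfolding U_def by (rule sum_S_Suc)
  also have "\<dots> = (\<Sum>i\<le>n. \<Sum>l\<in>S i. \<Sum>r\<in>S (n-i). Phi k p (pmf (val_pmf k p l)) (pmf (val_pmf k p r)) f)"
    unfolding pmf_val_Nd[OF assms] ..
  also have "\<dots> = (\<Sum>i\<le>n. Phi k p (U k p i) (U k p (n-i)) f)"
    unfolding Ue by (rule sum.cong[OF refl], rule Phi_bilin_sum[symmetric, OF finite_S finite_S])
  finally show ?thesis .
qed

lemma mu_Suc:
  assumes "k \<ge> 1" "0 \<le> p" "p \<le> 1"
  shows "mu k p (Suc n) f = (\<Sum>i\<le>n. a n i * Phi k p (mu k p i) (mu k p (n-i)) f)"
proof -
  have m: "mu k p j = (\<lambda>g. (1 / real (c j)) * U k p j g)" for j by (rule ext) (simp add: mu_U)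
  have t: "a n i * Phi k p (mu k p i) (mu k p (n-i)) f = Phi k p (U k p i) (U k p (n-i)) f / real (c (Suc n))" for i
  proof -
    have ci: "real (c i) \<noteq> 0" "real (c (n-i)) \<noteq> 0" "real (c (Suc n)) \<noteq> 0" using c_pos by simp_all
    have "a n i * Phi k p (mu k p i) (mu k p (n-i)) f
        = (real (c i) * real (c (n-i)) / real (c (Suc n))) * ((1 / real (c i)) * (1 / real (c (n-i))) * Phi k p (U k p i) (U k p (n-i)) f)"
      unfolding m Phi_scale a_def ..
    also have "\<dots> = Phi k p (U k p i) (U k p (n-i)) f / real (c (Suc n))"
      using ci by (simp add: field_simps)
    finally show ?thesis .
  qed
  have "mu k p (Suc n) f = (\<Sum>i\<le>n. Phi k p (U k p i) (U k p (n-i)) f) / real (c (Suc n))"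
    unfolding mu_U U_Suc[OF assms] ..
  also have "\<dots> = (\<Sum>i\<le>n. a n i * Phi k p (mu k p i) (mu k p (n-i)) f)"
    unfolding t sum_divide_distrib ..
  finally show ?thesis .
qed

locale gwsetup =
  fixes k :: nat and p :: real
  assumes k1: "k \<ge> 1" and p0: "0 < p" and p1: "p < 1"
begin

abbreviation "BB \<equiv> boolfuns k"
abbreviation "TT \<equiv> Top k"

definition prob :: "(nat set set \<Rightarrow> real) \<Rightarrow> bool" where
  "prob u \<longleftrightarrow> (\<forall>f. 0 \<le> u f) \<and> (\<forall>f. f \<notin> BB \<longrightarrow> u f = 0) \<and> (\<Sum>f\<in>BB. u f) = 1"

definition nrm :: "(nat set set \<Rightarrow> real) \<Rightarrow> real" where
  "nrm u = (\<Sum>f\<in>BB. \<bar>u f\<bar>)"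

lemma TT_in: "TT \<in> BB" by (simp add: Top_def boolfuns_def)

lemma sub_TT: "g \<in> BB \<Longrightarrow> g \<subseteq> TT" by (simp add: Top_def boolfuns_def)

lemma int_in: "g \<in> BB \<Longrightarrow> h \<in> BB \<Longrightarrow> g \<inter> h \<in> BB" by (auto simp: boolfuns_def)
lemma un_in: "g \<in> BB \<Longrightarrow> h \<in> BB \<Longrightarrow> g \<union> h \<in> BB" by (auto simp: boolfuns_def)

lemma phi_nn: "phi p g h f \<ge> 0" using p0 p1 by (simp add: phi_def)

lemma phi_sum: "g \<in> BB \<Longrightarrow> h \<in> BB \<Longrightarrow> (\<Sum>f\<in>BB. phi p g h f) = 1"
proof -
  assume g: "g \<in> BB" and h: "h \<in> BB"
  have d1: "(\<Sum>f\<in>BB. (if g \<inter> h = f then 1 else 0::real)) = 1"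
    using int_in[OF g h] by (simp add: sum.delta finite_boolfuns)
  have d2: "(\<Sum>f\<in>BB. (if g \<union> h = f then 1 else 0::real)) = 1"
    using un_in[OF g h] by (simp add: sum.delta finite_boolfuns)
  show ?thesis unfolding phi_def sum.distrib sum_distrib_left[symmetric] d1 d2 by simp
qed

lemma phi_out: "g \<in> BB \<Longrightarrow> h \<in> BB \<Longrightarrow> f \<notin> BB \<Longrightarrow> phi p g h f = 0"
  using int_in[of g h] un_in[of g h] by (auto simp: phi_def)

lemma mu_prob: "prob (mu k p n)"
proof -
  have ss: "set_pmf (F_law k p (2*n+1)) \<subseteq> BB"
    using set_val[OF k1] by (auto simp: F_law_def set_bind_pmf)
  show ?thesis unfolding prob_def mu_def
    using ss sum_pmf_eq_1[OF finite_boolfuns ss] by (auto simp: set_pmf_iff)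
qed

lemma prob_nn: "prob u \<Longrightarrow> 0 \<le> u f" by (simp add: prob_def)
lemma prob_out: "prob u \<Longrightarrow> f \<notin> BB \<Longrightarrow> u f = 0" by (simp add: prob_def)
lemma prob_sum: "prob u \<Longrightarrow> (\<Sum>f\<in>BB. u f) = 1" by (simp add: prob_def)

lemma prob_nrm: "prob u \<Longrightarrow> nrm u = 1"
  by (simp add: nrm_def prob_def)

lemma Phi_nn: "(\<And>g. 0 \<le> u g) \<Longrightarrow> (\<And>h. 0 \<le> v h) \<Longrightarrow> 0 \<le> Phi k p u v f"
  unfolding Phi_def by (intro sum_nonneg mult_nonneg_nonneg phi_nn) auto

lemma Phi_sum: "(\<Sum>f\<in>BB. Phi k p u v f) = (\<Sum>g\<in>BB. u g) * (\<Sum>h\<in>BB. v h)"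
proof -
  have "(\<Sum>f\<in>BB. Phi k p u v f) = (\<Sum>g\<in>BB. \<Sum>f\<in>BB. \<Sum>h\<in>BB. u g * v h * phi p g h f)"
    unfolding Phi_def by (rule sum.swap)
  also have "\<dots> = (\<Sum>g\<in>BB. \<Sum>h\<in>BB. \<Sum>f\<in>BB. u g * v h * phi p g h f)"
    by (rule sum.cong[OF refl], rule sum.swap)
  also have "\<dots> = (\<Sum>g\<in>BB. \<Sum>h\<in>BB. u g * v h)"
    by (rule sum.cong[OF refl], rule sum.cong[OF refl]) (simp add: sum_distrib_left[symmetric] phi_sum)
  also have "\<dots> = (\<Sum>g\<in>BB. u g) * (\<Sum>h\<in>BB. v h)"
    by (rule sum_product[symmetric])
  finally show ?thesis .
qed

lemma Phi_prob: "prob u \<Longrightarrow> prob v \<Longrightarrow> prob (Phi k p u v)"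
  unfolding prob_def
  by (auto simp: Phi_sum intro!: Phi_nn) (simp add: Phi_def phi_out)

lemma Phi_sym: "Phi k p u v f = Phi k p v u f"
proof -
  have "Phi k p u v f = (\<Sum>h\<in>BB. \<Sum>g\<in>BB. u g * v h * phi p g h f)"
    unfolding Phi_def by (rule sum.swap)
  also have "\<dots> = Phi k p v u f"
    unfolding Phi_def
    by (rule sum.cong[OF refl], rule sum.cong[OF refl]) (simp add: phi_def Int_commute Un_commute mult_ac)
  finally show ?thesis .
qed

lemma Phi_diff: "Phi k p u v f - Phi k p u' v f = Phi k p (\<lambda>g. u g - u' g) v f"
  by (simp only: Phi_def sum_subtractf[symmetric] left_diff_distrib)

lemma Phi_contr:
  assumes u: "prob u" and u': "prob u'" and v: "prob v"
  shows "nrm (\<lambda>f. Phi k p u v f - Phi k p u' v f) \<le> (1 - (1-p) * v TT) * nrm (\<lambda>g. u g - u' g)"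
proof -
  define d where "d g = u g - u' g" for g
  define K where "K g f = (\<Sum>h\<in>BB. v h * phi p g h f)" for g f
  define \<beta> where "\<beta> = (1-p) * v TT"
  define K' where "K' g f = K g f - (if f = TT then \<beta> else 0)" for g f
  have sd: "(\<Sum>g\<in>BB. d g) = 0" using u u' by (simp add: d_def sum_subtractf prob_sum)
  have e1: "Phi k p u v f - Phi k p u' v f = (\<Sum>g\<in>BB. d g * K g f)" for f
    unfolding Phi_diff by (simp add: Phi_def d_def K_def sum_distrib_left mult_ac)
  have e2: "(\<Sum>g\<in>BB. d g * K g f) = (\<Sum>g\<in>BB. d g * K' g f)" for f
  proof -
    have pw: "d g * K g f = d g * K' g f + (if f = TT then \<beta> else 0) * d g" for g
      by (simp add: K'_def algebra_simps)
    have "(\<Sum>g\<in>BB. d g * K g f) = (\<Sum>g\<in>BB. d g * K' g f) + (if f = TT then \<beta> else 0) * (\<Sum>g\<in>BB. d g)"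
      by (simp only: pw sum.distrib sum_distrib_left)
    then show ?thesis using sd by simp
  qed
  have KT: "K g TT \<ge> \<beta>" if g: "g \<in> BB" for g
  proof -
    have "v TT * phi p g TT TT \<le> K g TT"
      unfolding K_def
      by (rule member_le_sum[OF TT_in _ finite_boolfuns])
         (simp add: mult_nonneg_nonneg prob_nn[OF v] phi_nn)
    moreover have "phi p g TT TT \<ge> 1 - p"
      using sub_TT[OF g] p0 by (auto simp: phi_def Un_absorb1)
    ultimately show ?thesis unfolding \<beta>_def
      using prob_nn[OF v, of TT] by (smt (verit) mult.commute mult_left_mono)
  qed
  have K'nn: "K' g f \<ge> 0" if "g \<in> BB" for g f
  proof (cases "f = TT")
    case True then show ?thesis using KT[OF that] by (simp add: K'_def)
  next
    case False then show ?thesis unfolding K'_def K_def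
      by (simp add: sum_nonneg mult_nonneg_nonneg prob_nn[OF v] phi_nn)
  qed
  have K1: "(\<Sum>f\<in>BB. K g f) = 1" if "g \<in> BB" for g
  proof -
    have "(\<Sum>f\<in>BB. K g f) = (\<Sum>h\<in>BB. v h * (\<Sum>f\<in>BB. phi p g h f))"
      unfolding K_def by (subst sum.swap) (simp add: sum_distrib_left)
    also have "\<dots> = (\<Sum>h\<in>BB. v h)" using that by (simp add: phi_sum)
    finally show ?thesis using prob_sum[OF v] by simp
  qed
  have K'1: "(\<Sum>f\<in>BB. K' g f) = 1 - \<beta>" if "g \<in> BB" for g
    using K1[OF that] TT_in by (simp add: K'_def sum_subtractf finite_boolfuns sum.delta)
  have "nrm (\<lambda>f. Phi k p u v f - Phi k p u' v f) = (\<Sum>f\<in>BB. \<bar>\<Sum>g\<in>BB. d g * K' g f\<bar>)"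
    unfolding nrm_def e1 e2 ..
  also have "\<dots> \<le> (\<Sum>f\<in>BB. \<Sum>g\<in>BB. \<bar>d g\<bar> * K' g f)"
  proof (rule sum_mono)
    fix f assume "f \<in> BB"
    have "\<bar>\<Sum>g\<in>BB. d g * K' g f\<bar> \<le> (\<Sum>g\<in>BB. \<bar>d g * K' g f\<bar>)" by (rule sum_abs)
    also have "\<dots> = (\<Sum>g\<in>BB. \<bar>d g\<bar> * K' g f)"
      by (intro sum.cong refl) (simp add: abs_mult K'nn)
    finally show "\<bar>\<Sum>g\<in>BB. d g * K' g f\<bar> \<le> (\<Sum>g\<in>BB. \<bar>d g\<bar> * K' g f)" .
  qed
  also have "\<dots> = (\<Sum>g\<in>BB. \<bar>d g\<bar> * (\<Sum>f\<in>BB. K' g f))"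
    by (subst sum.swap) (simp add: sum_distrib_left)
  also have "\<dots> = (\<Sum>g\<in>BB. \<bar>d g\<bar> * (1 - \<beta>))"
    by (intro sum.cong refl) (simp add: K'1)
  also have "\<dots> = (1 - (1-p) * v TT) * nrm (\<lambda>g. u g - u' g)"
    by (simp add: nrm_def d_def \<beta>_def sum_distrib_left mult.commute)
  finally show ?thesis .
qed

abbreviation "mm \<equiv> mu k p"

lemma mu_rec: "mm (Suc n) f = (\<Sum>i\<le>n. a n i * Phi k p (mm i) (mm (n-i)) f)"
  by (rule mu_Suc) (use k1 p0 p1 in auto)

definition R :: "nat \<Rightarrow> nat \<Rightarrow> nat set set \<Rightarrow> real" where
  "R n M f = (\<Sum>i\<in>{M<..<n-M}. a n i * Phi k p (mm i) (mm (n-i)) f)"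

lemma R_nn: "R n M f \<ge> 0"
  unfolding R_def
  by (intro sum_nonneg mult_nonneg_nonneg a_nn Phi_nn prob_nn[OF mu_prob])

lemma split_rec:
  assumes "2*M+1 \<le> n"
  shows "mm (Suc n) f = 2 * (\<Sum>i\<le>M. a n i * Phi k p (mm (n-i)) (mm i) f) + R n M f"
proof -
  define t where "t i = a n i * Phi k p (mm i) (mm (n-i)) f" for i
  have tsym: "t (n-i) = t i" if "i \<le> n" for i
    using that by (simp add: t_def a_sym Phi_sym[of _ "mm (n-i)"])
  have U: "{..n} = {..M} \<union> ({M<..<n-M} \<union> {n-M..n})" using assms by auto
  have s1: "(\<Sum>i\<le>n. t i) = (\<Sum>i\<le>M. t i) + ((\<Sum>i\<in>{M<..<n-M}. t i) + (\<Sum>i\<in>{n-M..n}. t i))"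
    unfolding U using assms
    by (subst sum.union_disjoint, simp, simp, fastforce)+ simp
  have im: "{n-M..n} = (\<lambda>i. n - i) ` {..M}"
  proof
    show "{n-M..n} \<subseteq> (\<lambda>i. n - i) ` {..M}"
    proof
      fix x assume "x \<in> {n-M..n}"
      then have "x = n - (n - x)" "n - x \<in> {..M}" by auto
      then show "x \<in> (\<lambda>i. n - i) ` {..M}" by blast
    qed
  qed (use assms in auto)
  have inj: "inj_on (\<lambda>i. n - i) {..M}" using assms by (auto simp: inj_on_def)
  have s2: "(\<Sum>i\<in>{n-M..n}. t i) = (\<Sum>i\<le>M. t i)"
    unfolding im sum.reindex[OF inj] comp_def using assms by (intro sum.cong refl tsym) auto
  have s3: "(\<Sum>i\<le>M. t i) = (\<Sum>i\<le>M. a n i * Phi k p (mm (n-i)) (mm i) f)"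
    unfolding t_def by (simp add: Phi_sym[of _ "mm (n - _)"])
  have "mm (Suc n) f = (\<Sum>i\<le>n. t i)" unfolding t_def by (rule mu_rec)
  also have "\<dots> = 2 * (\<Sum>i\<le>M. t i) + R n M f"
    by (simp only: s1 s2) (simp add: R_def t_def)
  finally show ?thesis unfolding s3 .
qed

lemma R_sum:
  assumes "2*M+1 \<le> n"
  shows "(\<Sum>f\<in>BB. R n M f) = 1 - 2 * (\<Sum>i\<le>M. a n i)"
proof -
  have P: "(\<Sum>f\<in>BB. Phi k p (mm (n-i)) (mm i) f) = 1" for i
    using prob_sum[OF Phi_prob[OF mu_prob mu_prob]] .
  have "1 = (\<Sum>f\<in>BB. mm (Suc n) f)" using prob_sum[OF mu_prob] by simp
  also have "\<dots> = (\<Sum>f\<in>BB. 2 * (\<Sum>i\<le>M. a n i * Phi k p (mm (n-i)) (mm i) f) + R n M f)"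
    using split_rec[OF assms] by simp
  also have "\<dots> = 2 * (\<Sum>f\<in>BB. \<Sum>i\<le>M. a n i * Phi k p (mm (n-i)) (mm i) f) + (\<Sum>f\<in>BB. R n M f)"
    by (simp only: sum.distrib sum_distrib_left)
  also have "(\<Sum>f\<in>BB. \<Sum>i\<le>M. a n i * Phi k p (mm (n-i)) (mm i) f) = (\<Sum>i\<le>M. a n i)"
  proof -
    have "(\<Sum>f\<in>BB. \<Sum>i\<le>M. a n i * Phi k p (mm (n-i)) (mm i) f) = (\<Sum>i\<le>M. \<Sum>f\<in>BB. a n i * Phi k p (mm (n-i)) (mm i) f)"
      by (rule sum.swap)
    also have "\<dots> = (\<Sum>i\<le>M. a n i * (\<Sum>f\<in>BB. Phi k p (mm (n-i)) (mm i) f))"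
      by (simp only: sum_distrib_left)
    also have "\<dots> = (\<Sum>i\<le>M. a n i)" by (simp add: P)
    finally show ?thesis .
  qed
  finally show ?thesis by linarith
qed

lemma a_M_le: "2*M+1 \<le> n \<Longrightarrow> 2 * (\<Sum>i\<le>M. a n i) \<le> 1"
  using R_sum[of M n] sum_nonneg[of BB "R n M", OF R_nn] by simp

definition dd :: "nat \<Rightarrow> nat \<Rightarrow> real" where
  "dd n m = nrm (\<lambda>f. mm n f - mm m f)"

definition \<beta> :: real where "\<beta> = (1-p) * mm 1 TT"

lemma key_ineq:
  assumes n: "2*M+1 \<le> n" and m: "2*M+1 \<le> m" and M1: "1 \<le> M"
    and X: "\<And>i. i \<le> M \<Longrightarrow> dd (n-i) (m-i) \<le> X" and X0: "0 \<le> X"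
  shows "dd (Suc n) (Suc m) \<le> (\<Sum>i\<le>M. 2 * \<bar>a n i - a m i\<bar>) + (1 - 2 * (\<Sum>i\<le>M. a n i))
          + (1 - 2 * (\<Sum>i\<le>M. a m i)) + (1 - 2 * a m 1 * \<beta>) * X"
proof -
  define A where "A i f = Phi k p (mm (n-i)) (mm i) f" for i f
  define B where "B i f = Phi k p (mm (m-i)) (mm i) f" for i f
  have Ann: "A i f \<ge> 0" for i f unfolding A_def by (intro Phi_nn prob_nn[OF mu_prob])
  have Asum: "(\<Sum>f\<in>BB. A i f) = 1" for i unfolding A_def using prob_sum[OF Phi_prob[OF mu_prob mu_prob]] .
  have AB: "(\<Sum>f\<in>BB. \<bar>A i f - B i f\<bar>) \<le> (1 - (1-p) * mm i TT) * X" if "i \<le> M" for i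
  proof -
    have "(\<Sum>f\<in>BB. \<bar>A i f - B i f\<bar>) \<le> (1 - (1-p) * mm i TT) * dd (n-i) (m-i)"
      using Phi_contr[OF mu_prob mu_prob mu_prob] unfolding A_def B_def dd_def nrm_def by blast
    also have "\<dots> \<le> (1 - (1-p) * mm i TT) * X"
    proof (rule mult_left_mono[OF X[OF that]])
      have "mm i TT \<le> 1"
        using member_le_sum[of TT BB "mm i", OF TT_in _ finite_boolfuns] prob_sum[OF mu_prob] prob_nn[OF mu_prob]
        by simp
      then show "0 \<le> 1 - (1-p) * mm i TT" using p0 p1 prob_nn[OF mu_prob, of i TT]
        by (smt (verit) mult_left_le_one_le)
    qed
    finally show ?thesis .
  qed
  have pt: "\<bar>mm (Suc n) f - mm (Suc m) f\<bar> \<le> (\<Sum>i\<le>M. 2 * (\<bar>a n i - a m i\<bar> * A i f + a m i * \<bar>A i f - B i f\<bar>))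
            + R n M f + R m M f" for f
  proof -
    have "mm (Suc n) f - mm (Suc m) f = (\<Sum>i\<le>M. 2 * ((a n i - a m i) * A i f + a m i * (A i f - B i f)))
          + (R n M f - R m M f)"
    proof -
      have pw: "2*((a n i - a m i)*A i f + a m i*(A i f - B i f)) = 2*(a n i*A i f) - 2*(a m i*B i f)" for i
        by (simp add: algebra_simps)
      have S1: "(\<Sum>i\<le>M. 2*((a n i - a m i)*A i f + a m i*(A i f - B i f)))
          = 2*(\<Sum>i\<le>M. a n i*A i f) - 2*(\<Sum>i\<le>M. a m i*B i f)"
        by (simp only: pw sum_subtractf sum_distrib_left)
      have sn: "mm (Suc n) f = 2*(\<Sum>i\<le>M. a n i * A i f) + R n M f"
        unfolding A_def by (rule split_rec[OF n])
      have sm: "mm (Suc m) f = 2*(\<Sum>i\<le>M. a m i * B i f) + R m M f"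
        unfolding B_def by (rule split_rec[OF m])
      show ?thesis using S1 sn sm by linarith
    qed
    also have "\<bar>\<dots>\<bar> \<le> \<bar>\<Sum>i\<le>M. 2 * ((a n i - a m i) * A i f + a m i * (A i f - B i f))\<bar> + (R n M f + R m M f)"
      using R_nn[of n M f] R_nn[of m M f] by (smt (verit))
    also have "\<bar>\<Sum>i\<le>M. 2 * ((a n i - a m i) * A i f + a m i * (A i f - B i f))\<bar>
       \<le> (\<Sum>i\<le>M. 2 * (\<bar>a n i - a m i\<bar> * A i f + a m i * \<bar>A i f - B i f\<bar>))"
    proof -
      have "\<bar>\<Sum>i\<le>M. 2 * ((a n i - a m i) * A i f + a m i * (A i f - B i f))\<bar>
         \<le> (\<Sum>i\<le>M. \<bar>2 * ((a n i - a m i) * A i f + a m i * (A i f - B i f))\<bar>)" by (rule sum_abs)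
      also have "\<dots> \<le> (\<Sum>i\<le>M. 2 * (\<bar>a n i - a m i\<bar> * A i f + a m i * \<bar>A i f - B i f\<bar>))"
      proof (rule sum_mono)
        fix i
        have "\<bar>(a n i - a m i) * A i f + a m i * (A i f - B i f)\<bar> \<le> \<bar>(a n i - a m i) * A i f\<bar> + \<bar>a m i * (A i f - B i f)\<bar>"
          by (rule abs_triangle_ineq)
        also have "\<dots> = \<bar>a n i - a m i\<bar> * A i f + a m i * \<bar>A i f - B i f\<bar>"
          using Ann[of i f] a_nn[of m i] by (simp add: abs_mult)
        finally show "\<bar>2 * ((a n i - a m i) * A i f + a m i * (A i f - B i f))\<bar> \<le> 2 * (\<bar>a n i - a m i\<bar> * A i f + a m i * \<bar>A i f - B i f\<bar>)"
          by (simp add: abs_mult)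
      qed
      finally show ?thesis .
    qed
    finally show ?thesis by simp
  qed
  have "dd (Suc n) (Suc m) \<le> (\<Sum>f\<in>BB. (\<Sum>i\<le>M. 2 * (\<bar>a n i - a m i\<bar> * A i f + a m i * \<bar>A i f - B i f\<bar>))
            + R n M f + R m M f)"
    unfolding dd_def nrm_def by (rule sum_mono) (rule pt)
  also have "\<dots> = (\<Sum>i\<le>M. 2 * (\<bar>a n i - a m i\<bar> * (\<Sum>f\<in>BB. A i f) + a m i * (\<Sum>f\<in>BB. \<bar>A i f - B i f\<bar>)))
            + (\<Sum>f\<in>BB. R n M f) + (\<Sum>f\<in>BB. R m M f)"
  proof -
    have "(\<Sum>f\<in>BB. \<Sum>i\<le>M. 2 * (\<bar>a n i - a m i\<bar> * A i f + a m i * \<bar>A i f - B i f\<bar>))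
       = (\<Sum>i\<le>M. \<Sum>f\<in>BB. 2 * (\<bar>a n i - a m i\<bar> * A i f + a m i * \<bar>A i f - B i f\<bar>))"
      by (rule sum.swap)
    also have "\<dots> = (\<Sum>i\<le>M. 2 * (\<bar>a n i - a m i\<bar> * (\<Sum>f\<in>BB. A i f) + a m i * (\<Sum>f\<in>BB. \<bar>A i f - B i f\<bar>)))"
      by (simp only: sum.distrib sum_distrib_left[symmetric])
    finally show ?thesis by (simp only: sum.distrib)
  qed
  also have "\<dots> \<le> (\<Sum>i\<le>M. 2 * (\<bar>a n i - a m i\<bar> + a m i * ((1 - (1-p) * mm i TT) * X)))
            + (1 - 2 * (\<Sum>i\<le>M. a n i)) + (1 - 2 * (\<Sum>i\<le>M. a m i))"
    unfolding R_sum[OF n] R_sum[OF m] Asum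
    by (intro add_mono order_refl sum_mono mult_left_mono AB a_nn) auto
  also have "(\<Sum>i\<le>M. 2 * (\<bar>a n i - a m i\<bar> + a m i * ((1 - (1-p) * mm i TT) * X)))
      = (\<Sum>i\<le>M. 2 * \<bar>a n i - a m i\<bar>) + (2 * (\<Sum>i\<le>M. a m i) * X - (\<Sum>i\<le>M. 2 * a m i * ((1-p) * mm i TT) * X))"
    by (simp add: sum.distrib sum_subtractf sum_distrib_left sum_distrib_right algebra_simps)
  also have "(2 * (\<Sum>i\<le>M. a m i) * X - (\<Sum>i\<le>M. 2 * a m i * ((1-p) * mm i TT) * X)) \<le> (1 - 2 * a m 1 * \<beta>) * X"
  proof -
    have "2 * a m 1 * ((1-p) * mm 1 TT) * X \<le> (\<Sum>i\<le>M. 2 * a m i * ((1-p) * mm i TT) * X)"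
      using M1 by (intro member_le_sum[where f="\<lambda>i. 2 * a m i * ((1-p) * mm i TT) * X" and i=1])
        (auto intro!: mult_nonneg_nonneg a_nn prob_nn[OF mu_prob] X0 simp: less_imp_le[OF p1] )
    moreover have "2 * (\<Sum>i\<le>M. a m i) * X \<le> 1 * X" using a_M_le[OF m] X0 by (intro mult_right_mono) auto
    ultimately show ?thesis unfolding \<beta>_def by (simp add: algebra_simps)
  qed
  finally show ?thesis by simp
qed

end

context gwsetup
begin

lemma dd_nn: "dd n m \<ge> 0" unfolding dd_def nrm_def by (simp add: sum_nonneg)

lemma dd_le2: "dd n m \<le> 2"
proof -
  have "dd n m \<le> (\<Sum>f\<in>BB. mm n f + mm m f)"
    unfolding dd_def nrm_def
  proof (rule sum_mono)
    fix f
    have "0 \<le> mm n f" "0 \<le> mm m f" by (rule prob_nn[OF mu_prob])+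
    then show "\<bar>mm n f - mm m f\<bar> \<le> mm n f + mm m f" by (simp add: abs_le_iff)
  qed
  also have "\<dots> = 2" using prob_sum[OF mu_prob, of n] prob_sum[OF mu_prob, of m]
    by (simp add: sum.distrib)
  finally show ?thesis .
qed

lemma dd_pt: "\<bar>mm n f - mm m f\<bar> \<le> dd n m"
proof (cases "f \<in> BB")
  case True
  then show ?thesis unfolding dd_def nrm_def
    by (rule member_le_sum[where f="\<lambda>f. \<bar>mm n f - mm m f\<bar>"]) (auto simp: finite_boolfuns)
next
  case False
  then show ?thesis using prob_out[OF mu_prob] dd_nn by simp
qed

definition DD :: "nat \<Rightarrow> real" where
  "DD N = Sup ((\<lambda>(n,m). dd n m) ` ({N..} \<times> {N..}))"

lemma DD_upper: "N \<le> n \<Longrightarrow> N \<le> m \<Longrightarrow> dd n m \<le> DD N"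
  unfolding DD_def
  by (rule cSup_upper) (auto intro!: bdd_aboveI[where M=2] dd_le2)

lemma DD_least: "(\<And>n m. N \<le> n \<Longrightarrow> N \<le> m \<Longrightarrow> dd n m \<le> X) \<Longrightarrow> DD N \<le> X"
  unfolding DD_def by (rule cSup_least) auto

lemma DD_nn: "0 \<le> DD N" using DD_upper[of N N N] dd_nn[of N N] by simp

lemma DD_le2: "DD N \<le> 2" by (rule DD_least) (rule dd_le2)

lemma DD_dec: "decseq DD"
  unfolding decseq_def by (auto intro!: DD_least DD_upper)

lemma beta_nn: "0 \<le> \<beta>" unfolding \<beta>_def using p1 prob_nn[OF mu_prob] by simp

lemma e_step:
  assumes e: "0 < \<epsilon>"
  shows "\<exists>M N1. \<forall>N\<ge>N1. DD (Suc N) \<le> 10 * \<epsilon> + (1 - 2 * w 1 * \<beta> + 2 * \<epsilon> * \<beta>) * DD (N - M)"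
proof -
  have "\<forall>\<^sub>F M in sequentially. dist (\<Sum>i\<le>M. w i) (1/2) < \<epsilon>/2"
    using tendsto_iff[THEN iffD1, OF w_sum_lim, rule_format, of "\<epsilon>/2"] e by simp
  then obtain M0 where M0: "\<And>M. M \<ge> M0 \<Longrightarrow> dist (\<Sum>i\<le>M. w i) (1/2) < \<epsilon>/2"
    by (auto simp: eventually_sequentially)
  define M where "M = max M0 1"
  have M1: "1 \<le> M" by (simp add: M_def)
  have wM: "1 - 2 * (\<Sum>i\<le>M. w i) \<le> \<epsilon>"
  proof -
    have h: "dist (\<Sum>i\<le>M. w i) (1/2) < \<epsilon>/2" using M0[of M] by (simp add: M_def)
    then have h': "\<bar>(\<Sum>i\<le>M. w i) - 1/2\<bar> < \<epsilon>/2" by (simp only: dist_real_def)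
    show ?thesis using h' abs_less_iff[of "(\<Sum>i\<le>M. w i) - 1/2" "\<epsilon>/2"] by linarith
  qed
  define e where "e n = (\<Sum>i\<le>M. \<bar>a n i - w i\<bar>)" for n
  have "(\<lambda>n. \<Sum>i\<le>M. \<bar>a n i - w i\<bar>) \<longlonglongrightarrow> (\<Sum>i\<le>M. \<bar>w i - w i\<bar>)"
    by (intro tendsto_sum tendsto_rabs tendsto_diff a_lim tendsto_const)
  then have "e \<longlonglongrightarrow> 0" unfolding e_def[abs_def] by simp
  then have "\<forall>\<^sub>F n in sequentially. e n < \<epsilon>" using e by (simp add: order_tendsto_iff)
  then obtain N0 where N0: "\<And>n. n \<ge> N0 \<Longrightarrow> e n < \<epsilon>" by (auto simp: eventually_sequentially)
  have en: "e n \<ge> 0" for n unfolding e_def by (simp add: sum_nonneg)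
  have amw: "\<bar>a n i - w i\<bar> \<le> e n" if "i \<le> M" for n i
    unfolding e_def using that by (intro member_le_sum[where f="\<lambda>i. \<bar>a n i - w i\<bar>"]) auto
  have sw: "1 - 2 * (\<Sum>i\<le>M. a n i) \<le> \<epsilon> + 2 * e n" for n
  proof -
    have "(\<Sum>i\<le>M. w i) - (\<Sum>i\<le>M. a n i) \<le> e n"
      unfolding e_def sum_subtractf[symmetric]
      by (rule sum_mono) auto
    then show ?thesis using wM by linarith
  qed
  have sd: "(\<Sum>i\<le>M. 2 * \<bar>a n i - a m i\<bar>) \<le> 2 * e n + 2 * e m" for n m
  proof -
    have "(\<Sum>i\<le>M. 2 * \<bar>a n i - a m i\<bar>) \<le> (\<Sum>i\<le>M. 2 * \<bar>a n i - w i\<bar> + 2 * \<bar>a m i - w i\<bar>)"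
    proof (rule sum_mono)
      fix i
      have "\<bar>(a n i - w i) + (w i - a m i)\<bar> \<le> \<bar>a n i - w i\<bar> + \<bar>w i - a m i\<bar>" by (rule abs_triangle_ineq)
      moreover have "\<bar>w i - a m i\<bar> = \<bar>a m i - w i\<bar>" by (rule abs_minus_commute)
      ultimately show "2 * \<bar>a n i - a m i\<bar> \<le> 2 * \<bar>a n i - w i\<bar> + 2 * \<bar>a m i - w i\<bar>" by simp
    qed
    also have "\<dots> = 2 * e n + 2 * e m" by (simp add: e_def sum.distrib sum_distrib_left)
    finally show ?thesis .
  qed
  show ?thesis
  proof (intro exI allI impI)
    fix N assume N: "max N0 (2*M+1) \<le> N"
    define X where "X = DD (N - M)"
    have X0: "0 \<le> X" by (simp add: X_def DD_nn)
    show "DD (Suc N) \<le> 10 * \<epsilon> + (1 - 2 * w 1 * \<beta> + 2 * \<epsilon> * \<beta>) * DD (N - M)"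
      unfolding X_def[symmetric]
    proof (rule DD_least)
      fix n' m' assume n': "Suc N \<le> n'" and m': "Suc N \<le> m'"
      then obtain n m where nm: "n' = Suc n" "m' = Suc m" "N \<le> n" "N \<le> m"
        by (metis Suc_le_D Suc_le_mono)
      have n: "2*M+1 \<le> n" "N0 \<le> n" and m: "2*M+1 \<le> m" "N0 \<le> m" using N nm by auto
      have Xb: "dd (n-i) (m-i) \<le> X" if "i \<le> M" for i
        unfolding X_def by (rule DD_upper) (use nm that in auto)
      have ki: "dd (Suc n) (Suc m) \<le> (\<Sum>i\<le>M. 2 * \<bar>a n i - a m i\<bar>) + (1 - 2 * (\<Sum>i\<le>M. a n i))
          + (1 - 2 * (\<Sum>i\<le>M. a m i)) + (1 - 2 * a m 1 * \<beta>) * X"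
        by (rule key_ineq[OF n(1) m(1) M1 Xb X0])
      have hw: "w 1 - \<epsilon> \<le> a m 1" using amw[OF M1, of m] N0[OF m(2)] by linarith
      have hb: "1 - 2 * a m 1 * \<beta> \<le> 1 - 2 * w 1 * \<beta> + 2 * \<epsilon> * \<beta>"
        using mult_left_mono[OF hw beta_nn] by (simp add: algebra_simps)
      have hX: "(1 - 2 * a m 1 * \<beta>) * X \<le> (1 - 2 * w 1 * \<beta> + 2 * \<epsilon> * \<beta>) * X"
        by (rule mult_right_mono[OF hb X0])
      show "dd n' m' \<le> 10 * \<epsilon> + (1 - 2 * w 1 * \<beta> + 2 * \<epsilon> * \<beta>) * X"
        unfolding nm(1,2) using ki hX sd[of n m] sw[of n] sw[of m] N0[OF n(2)] N0[OF m(2)] by linarith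
    qed
  qed
qed

lemma mu1_TT_pos_imp: "\<beta> > 0 \<Longrightarrow> DD \<longlonglongrightarrow> 0"
proof -
  assume bpos: "\<beta> > 0"
  obtain L where L: "DD \<longlonglongrightarrow> L" "\<forall>i. L \<le> DD i"
    using decseq_convergent[OF DD_dec, of 0] DD_nn by blast
  have L0: "0 \<le> L" by (rule LIMSEQ_le_const[OF L(1)]) (auto intro: DD_nn)
  have L2: "L \<le> 2" by (rule LIMSEQ_le_const2[OF L(1)]) (auto intro: DD_le2)
  have w1p: "w 1 > 0" by (rule w_pos)
  have main: "L \<le> 10 * \<epsilon> + (1 - 2 * w 1 * \<beta> + 2 * \<epsilon> * \<beta>) * L" if e: "\<epsilon> > 0" for \<epsilon>
  proof -
    obtain M N1 where MN: "\<And>N. N \<ge> N1 \<Longrightarrow> DD (Suc N) \<le> 10 * \<epsilon> + (1 - 2 * w 1 * \<beta> + 2 * \<epsilon> * \<beta>) * DD (N - M)"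
      using e_step[OF e] by blast
    have t1: "(\<lambda>N. DD (Suc N)) \<longlonglongrightarrow> L" by (rule LIMSEQ_Suc[OF L(1)])
    have t2: "(\<lambda>N. 10 * \<epsilon> + (1 - 2 * w 1 * \<beta> + 2 * \<epsilon> * \<beta>) * DD (N - M))
        \<longlonglongrightarrow> 10 * \<epsilon> + (1 - 2 * w 1 * \<beta> + 2 * \<epsilon> * \<beta>) * L"
      by (intro tendsto_add tendsto_const tendsto_mult shift_lim[OF L(1)])
    show ?thesis by (rule LIMSEQ_le[OF t1 t2]) (use MN in blast)
  qed
  have "2 * w 1 * \<beta> * L \<le> 0"
  proof (rule field_le_epsilon)
    fix e :: real assume e: "0 < e"
    define \<epsilon> where "\<epsilon> = e / (10 + 4 * \<beta>)"
    have epos: "\<epsilon> > 0" unfolding \<epsilon>_def using e beta_nn by simp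
    have "2 * w 1 * \<beta> * L \<le> 10 * \<epsilon> + 2 * \<epsilon> * \<beta> * L"
      using main[OF epos] by (simp add: algebra_simps)
    also have "2 * \<epsilon> * \<beta> * L \<le> 2 * \<epsilon> * \<beta> * 2"
      using L2 epos beta_nn by (intro mult_left_mono) auto
    also have "10 * \<epsilon> + 2 * \<epsilon> * \<beta> * 2 = e"
    proof -
      have d: "10 + 4 * \<beta> \<noteq> 0" using beta_nn by simp
      have "10 * \<epsilon> + 2 * \<epsilon> * \<beta> * 2 = (10 + 4 * \<beta>) * \<epsilon>" by (simp add: algebra_simps)
      also have "\<dots> = e" unfolding \<epsilon>_def using d by simp
      finally show ?thesis .
    qed
    finally show "2 * w 1 * \<beta> * L \<le> 0 + e" by simp
  qed
  then have "L = 0" using L0 w1p bpos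
    by (smt (verit) mult_pos_pos)
  then show ?thesis using L(1) by simp
qed

end

context gwsetup
begin

lemma val_Lf_lit: "l \<in> {..<k} \<times> (UNIV::bool set) \<Longrightarrow> lit k l \<in> set_pmf (val_pmf k p Lf)"
proof -
  assume l: "l \<in> {..<k} \<times> (UNIV::bool set)"
  have "finite ({..<k} \<times> (UNIV::bool set))" "{..<k} \<times> (UNIV::bool set) \<noteq> {}"
    using k1 by (auto simp: lessThan_empty_iff)
  then show ?thesis using l by auto
qed

lemma val_Nd_op:
  assumes g: "g \<in> set_pmf (val_pmf k p l)" and h: "h \<in> set_pmf (val_pmf k p r)"
  shows "g \<inter> h \<in> set_pmf (val_pmf k p (Nd l r))" "g \<union> h \<in> set_pmf (val_pmf k p (Nd l r))"
proof -
  have sb: "set_pmf (bernoulli_pmf p) = UNIV" using p0 p1 by simp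
  have X: "(if b then g \<inter> h else g \<union> h) \<in> set_pmf (bind_pmf (val_pmf k p l) (\<lambda>f. bind_pmf (val_pmf k p r) (\<lambda>g'.
     return_pmf (if b then f \<inter> g' else f \<union> g'))))" for b
    using g h by (auto simp: set_bind_pmf)
  have "\<And>b. (if b then g \<inter> h else g \<union> h) \<in> set_pmf (val_pmf k p (Nd l r))"
    unfolding val_pmf.simps set_bind_pmf[of "bernoulli_pmf p"] sb using X by blast
  from this[of True] this[of False] show "g \<inter> h \<in> set_pmf (val_pmf k p (Nd l r))" "g \<union> h \<in> set_pmf (val_pmf k p (Nd l r))"
    by simp_all
qed

definition Rch :: "nat set set set" where "Rch = {f. \<exists>s. f \<in> set_pmf (val_pmf k p s)}"

lemma Rch_lit: "j < k \<Longrightarrow> lit k (j, b) \<in> Rch"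
proof -
  assume j: "j < k"
  have "lit k (j,b) \<in> set_pmf (val_pmf k p Lf)" by (rule val_Lf_lit) (use j in simp)
  then show ?thesis unfolding Rch_def by blast
qed

lemma Rch_int: "g \<in> Rch \<Longrightarrow> h \<in> Rch \<Longrightarrow> g \<inter> h \<in> Rch"
  unfolding Rch_def using val_Nd_op(1) by blast

lemma Rch_un: "g \<in> Rch \<Longrightarrow> h \<in> Rch \<Longrightarrow> g \<union> h \<in> Rch"
  unfolding Rch_def using val_Nd_op(2) by blast

lemma Rch_INT: "finite J \<Longrightarrow> J \<noteq> {} \<Longrightarrow> J \<subseteq> {..<k} \<Longrightarrow> (\<Inter>j\<in>J. lit k (j, j \<in> A)) \<in> Rch"
proof (induction J rule: finite_ne_induct)
  case (singleton x) then show ?case using Rch_lit by simp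
next
  case (insert x F) then show ?case using Rch_lit Rch_int by simp
qed

lemma Rch_single: "A \<subseteq> {..<k} \<Longrightarrow> {A} \<in> Rch"
proof -
  assume A: "A \<subseteq> {..<k}"
  have "(\<Inter>j\<in>{..<k}. lit k (j, j \<in> A)) = {A}"
  proof
    show "(\<Inter>j\<in>{..<k}. lit k (j, j \<in> A)) \<subseteq> {A}"
    proof
      fix X assume X: "X \<in> (\<Inter>j\<in>{..<k}. lit k (j, j \<in> A))"
      have "X \<in> lit k (0, 0 \<in> A)" using X k1 by auto
      then have "X \<subseteq> {..<k}" by (simp add: lit_def)
      moreover have "\<forall>j<k. (j \<in> X) = (j \<in> A)" using X by (auto simp: lit_def)
      ultimately have "X \<subseteq> {..<k}" "\<forall>j<k. (j \<in> X) = (j \<in> A)" by auto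
      then have "X = A" using A by blast
      then show "X \<in> {A}" by simp
    qed
    show "{A} \<subseteq> (\<Inter>j\<in>{..<k}. lit k (j, j \<in> A))" using A by (auto simp: lit_def)
  qed
  moreover have "(\<Inter>j\<in>{..<k}. lit k (j, j \<in> A)) \<in> Rch"
    by (rule Rch_INT) (use k1 in \<open>auto simp: lessThan_empty_iff\<close>)
  ultimately show ?thesis by simp
qed

lemma Rch_all: "f \<in> BB \<Longrightarrow> f \<in> Rch"
proof -
  assume f: "f \<in> BB"
  show ?thesis
  proof (cases "f = {}")
    case True
    have "lit k (0, True) \<inter> lit k (0, False) = {}" by (auto simp: lit_def)
    then show ?thesis using True Rch_int[OF Rch_lit Rch_lit] k1 by (metis One_nat_def Suc_le_eq)
  next
    case False
    have fin: "finite f" using f by (auto simp: boolfuns_def intro: finite_subset)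
    have "finite f \<Longrightarrow> f \<noteq> {} \<Longrightarrow> f \<subseteq> Pow {..<k} \<Longrightarrow> f \<in> Rch"
    proof (induction f rule: finite_ne_induct)
      case (singleton x) then show ?case using Rch_single by simp
    next
      case (insert x F)
      then have x: "x \<subseteq> {..<k}" and F: "F \<in> Rch" by auto
      have "{x} \<union> F \<in> Rch" by (rule Rch_un[OF Rch_single[OF x] F])
      then show ?case by simp
    qed
    then show ?thesis using fin False f by (simp add: boolfuns_def)
  qed
qed

lemma mu_pos_of_set: "f \<in> set_pmf (val_pmf k p s) \<Longrightarrow> \<exists>i. mm i f > 0"
proof -
  assume fs: "f \<in> set_pmf (val_pmf k p s)"
  obtain i where i: "nodes s = 2*i+1" using nodes_odd[of s] by (metis oddE)
  have si: "s \<in> S i" using i by (simp add: S_def)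
  have "pmf (val_pmf k p s) f \<le> U k p i f"
    unfolding U_def by (rule member_le_sum[OF si]) (auto simp: finite_S)
  moreover have "pmf (val_pmf k p s) f > 0" using fs by (simp add: pmf_positive)
  ultimately have "U k p i f > 0" by simp
  then have "mm i f > 0" using c_pos[of i] by (simp add: mu_U)
  then show ?thesis by blast
qed

lemma mu1_TT: "mm 1 TT > 0"
proof -
  have "lit k (0, True) \<union> lit k (0, False) = TT" by (auto simp: lit_def Top_def)
  moreover have "lit k (0, True) \<union> lit k (0, False) \<in> set_pmf (val_pmf k p (Nd Lf Lf))"
    by (rule val_Nd_op(2); rule val_Lf_lit) (use k1 in auto)
  ultimately have T: "TT \<in> set_pmf (val_pmf k p (Nd Lf Lf))" by simp
  have si: "Nd Lf Lf \<in> S 1" by (simp add: S_def)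
  have "pmf (val_pmf k p (Nd Lf Lf)) TT \<le> U k p 1 TT"
    unfolding U_def by (rule member_le_sum[OF si]) (auto simp: finite_S)
  moreover have "pmf (val_pmf k p (Nd Lf Lf)) TT > 0" using T by (simp add: pmf_positive)
  ultimately have "U k p 1 TT > 0" by simp
  then show ?thesis using c_pos[of 1] by (simp add: mu_U)
qed

lemma beta_pos: "\<beta> > 0" unfolding \<beta>_def using mu1_TT p1 by simp

lemma DD_lim: "DD \<longlonglongrightarrow> 0" by (rule mu1_TT_pos_imp[OF beta_pos])

lemma mu_cauchy: "Cauchy (\<lambda>n. mm n f)"
proof (rule metric_CauchyI)
  fix e :: real assume e: "0 < e"
  have "\<forall>\<^sub>F N in sequentially. DD N < e" using DD_lim e by (simp add: order_tendsto_iff)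
  then obtain N where N: "DD N < e" by (auto simp: eventually_sequentially)
  show "\<exists>M. \<forall>m\<ge>M. \<forall>n\<ge>M. dist (mm m f) (mm n f) < e"
  proof (intro exI allI impI)
    fix m n assume "N \<le> m" "N \<le> n"
    then have "dd m n \<le> DD N" by (rule DD_upper)
    then show "dist (mm m f) (mm n f) < e" using dd_pt[of m f n] N by (simp add: dist_real_def)
  qed
qed

definition pii :: "nat set set \<Rightarrow> real" where "pii f = lim (\<lambda>n. mm n f)"

lemma mu_lim: "(\<lambda>n. mm n f) \<longlonglongrightarrow> pii f"
  unfolding pii_def using mu_cauchy[of f] by (simp add: Cauchy_convergent_iff convergent_LIMSEQ_iff)

lemma pii_nn: "pii f \<ge> 0"
  by (rule LIMSEQ_le_const[OF mu_lim]) (auto intro: prob_nn[OF mu_prob])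

lemma pii_out: "f \<notin> BB \<Longrightarrow> pii f = 0"
proof -
  assume f: "f \<notin> BB"
  have "(\<lambda>n. mm n f) \<longlonglongrightarrow> 0" using prob_out[OF mu_prob f] by simp
  then show ?thesis using mu_lim LIMSEQ_unique by blast
qed

lemma pii_sum: "(\<Sum>f\<in>BB. pii f) = 1"
proof -
  have "(\<lambda>n. \<Sum>f\<in>BB. mm n f) \<longlonglongrightarrow> (\<Sum>f\<in>BB. pii f)" by (intro tendsto_sum mu_lim)
  moreover have "(\<lambda>n. \<Sum>f\<in>BB. mm n f) \<longlonglongrightarrow> 1" using prob_sum[OF mu_prob] by simp
  ultimately show ?thesis using LIMSEQ_unique by blast
qed

lemma Phi_low: "(\<And>g. 0 \<le> u g) \<Longrightarrow> (\<And>h. 0 \<le> v h) \<Longrightarrow> g \<in> BB \<Longrightarrow> h \<in> BB \<Longrightarrow> u g * v h * phi p g h f \<le> Phi k p u v f"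
proof -
  assume u: "\<And>g. 0 \<le> u g" and v: "\<And>h. 0 \<le> v h" and g: "g \<in> BB" and h: "h \<in> BB"
  have "u g * v h * phi p g h f \<le> (\<Sum>h\<in>BB. u g * v h * phi p g h f)"
    by (rule member_le_sum[OF h]) (auto intro!: mult_nonneg_nonneg u v phi_nn simp: finite_boolfuns)
  also have "\<dots> \<le> Phi k p u v f" unfolding Phi_def
    by (rule member_le_sum[OF g, where f="\<lambda>g. \<Sum>h\<in>BB. u g * v h * phi p g h f"])
       (auto intro!: sum_nonneg mult_nonneg_nonneg u v phi_nn simp: finite_boolfuns)
  finally show ?thesis .
qed

lemma mu_low: "i \<le> n \<Longrightarrow> a n i * Phi k p (mm i) (mm (n-i)) f \<le> mm (Suc n) f"
  unfolding mu_rec[of n f]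
  by (rule member_le_sum[where f="\<lambda>i. a n i * Phi k p (mm i) (mm (n-i)) f"])
     (auto intro!: mult_nonneg_nonneg a_nn Phi_nn prob_nn[OF mu_prob])

lemma Phi_TT: "prob u \<Longrightarrow> prob v \<Longrightarrow> (1-p) * u TT \<le> Phi k p u v TT"
proof -
  assume u: "prob u" and v: "prob v"
  have "(\<Sum>h\<in>BB. u TT * v h * (1-p)) \<le> (\<Sum>h\<in>BB. u TT * v h * phi p TT h TT)"
  proof (rule sum_mono)
    fix h assume h: "h \<in> BB"
    have "TT \<union> h = TT" using sub_TT[OF h] by auto
    then have "1 - p \<le> phi p TT h TT" using p0 by (simp add: phi_def)
    then show "u TT * v h * (1-p) \<le> u TT * v h * phi p TT h TT"
      by (intro mult_left_mono mult_nonneg_nonneg prob_nn[OF u] prob_nn[OF v])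
  qed
  also have "\<dots> \<le> Phi k p u v TT" unfolding Phi_def
    by (rule member_le_sum[OF TT_in, where f="\<lambda>g. \<Sum>h\<in>BB. u g * v h * phi p g h TT"])
       (auto intro!: sum_nonneg mult_nonneg_nonneg prob_nn[OF u] prob_nn[OF v] phi_nn simp: finite_boolfuns)
  finally show ?thesis
    using prob_sum[OF v] by (simp add: sum_distrib_left[symmetric] sum_distrib_right[symmetric] mult_ac)
qed

lemma pii_TT: "pii TT > 0"
proof -
  have "w 1 * ((1-p) * mm 1 TT) \<le> pii TT"
  proof (rule LIMSEQ_le[where X="\<lambda>n. a n 1 * ((1-p) * mm 1 TT)" and Y="\<lambda>n. mm (Suc n) TT"])
    show "(\<lambda>n. a n 1 * ((1-p) * mm 1 TT)) \<longlonglongrightarrow> w 1 * ((1-p) * mm 1 TT)"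
      by (intro tendsto_mult a_lim tendsto_const)
    show "(\<lambda>n. mm (Suc n) TT) \<longlonglongrightarrow> pii TT" by (rule LIMSEQ_Suc[OF mu_lim])
    show "\<exists>N. \<forall>n\<ge>N. a n 1 * ((1-p) * mm 1 TT) \<le> mm (Suc n) TT"
    proof (intro exI allI impI)
      fix n :: nat assume n: "1 \<le> n"
      have "a n 1 * ((1-p) * mm 1 TT) \<le> a n 1 * Phi k p (mm 1) (mm (n-1)) TT"
        by (intro mult_left_mono a_nn Phi_TT mu_prob)
      also have "\<dots> \<le> mm (Suc n) TT" by (rule mu_low[OF n])
      finally show "a n 1 * ((1-p) * mm 1 TT) \<le> mm (Suc n) TT" .
    qed
  qed
  moreover have "w 1 * ((1-p) * mm 1 TT) > 0" using w_pos mu1_TT p1 by simp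
  ultimately show ?thesis by linarith
qed

lemma pii_pos: "f \<in> BB \<Longrightarrow> pii f > 0"
proof -
  assume f: "f \<in> BB"
  obtain s where "f \<in> set_pmf (val_pmf k p s)" using Rch_all[OF f] by (auto simp: Rch_def)
  then obtain i where mi: "mm i f > 0" using mu_pos_of_set by blast
  have ph: "p \<le> phi p f TT f" using sub_TT[OF f] p1 by (auto simp: phi_def Int_absorb2)
  have "w i * (mm i f * pii TT * p) \<le> pii f"
  proof (rule LIMSEQ_le[where X="\<lambda>n. a n i * (mm i f * mm (n-i) TT * p)" and Y="\<lambda>n. mm (Suc n) f"])
    show "(\<lambda>n. a n i * (mm i f * mm (n-i) TT * p)) \<longlonglongrightarrow> w i * (mm i f * pii TT * p)"
      by (intro tendsto_mult a_lim tendsto_const shift_lim[OF mu_lim])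
    show "(\<lambda>n. mm (Suc n) f) \<longlonglongrightarrow> pii f" by (rule LIMSEQ_Suc[OF mu_lim])
    show "\<exists>N. \<forall>n\<ge>N. a n i * (mm i f * mm (n-i) TT * p) \<le> mm (Suc n) f"
    proof (intro exI allI impI)
      fix n :: nat assume n: "i \<le> n"
      have "mm i f * mm (n-i) TT * p \<le> mm i f * mm (n-i) TT * phi p f TT f"
        by (intro mult_left_mono ph mult_nonneg_nonneg prob_nn[OF mu_prob])
      also have "\<dots> \<le> Phi k p (mm i) (mm (n-i)) f"
        by (rule Phi_low[OF prob_nn[OF mu_prob] prob_nn[OF mu_prob] f TT_in])
      finally have "a n i * (mm i f * mm (n-i) TT * p) \<le> a n i * Phi k p (mm i) (mm (n-i)) f"
        by (intro mult_left_mono a_nn)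
      also have "\<dots> \<le> mm (Suc n) f" by (rule mu_low[OF n])
      finally show "a n i * (mm i f * mm (n-i) TT * p) \<le> mm (Suc n) f" .
    qed
  qed
  moreover have "w i * (mm i f * pii TT * p) > 0" using w_pos mi pii_TT p0 by simp
  ultimately show ?thesis by linarith
qed

end

theorem mainTheorem7:
  fixes k :: nat and p :: real
  assumes "k \<ge> 1" and "0 < p" and "p < 1"
  shows "\<exists>Finf :: nat set set pmf.
           set_pmf Finf \<subseteq> boolfuns k \<and>
           (\<forall>f. (\<lambda>m. pmf (F_law k p (2 * m + 1)) f) \<longlonglongrightarrow> pmf Finf f) \<and>
           (\<forall>f \<in> boolfuns k. pmf Finf f > 0)"
proof -
  interpret G: gwsetup k p using assms by unfold_locales
  have int1: "(\<integral>\<^sup>+x. ennreal (G.pii x) \<partial>count_space UNIV) = 1"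
  proof -
    have "(\<integral>\<^sup>+x. ennreal (G.pii x) \<partial>count_space UNIV) = (\<Sum>x\<in>boolfuns k. ennreal (G.pii x))"
      by (rule nn_integral_count_space') (auto simp: finite_boolfuns G.pii_out)
    also have "\<dots> = ennreal (\<Sum>x\<in>boolfuns k. G.pii x)" by (simp add: G.pii_nn)
    also have "\<dots> = 1" by (simp add: G.pii_sum)
    finally show ?thesis .
  qed
  have P: "pmf (embed_pmf G.pii) = G.pii"
    by (rule pmf_embed_pmf') (auto simp: G.pii_nn int1)
  show ?thesis
  proof (intro exI conjI allI ballI)
    show "set_pmf (embed_pmf G.pii) \<subseteq> boolfuns k"
    proof
      fix x assume "x \<in> set_pmf (embed_pmf G.pii)"
      then have "G.pii x \<noteq> 0" by (simp add: set_pmf_iff P)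
      then show "x \<in> boolfuns k" using G.pii_out by blast
    qed
    fix f
    show "(\<lambda>m. pmf (F_law k p (2 * m + 1)) f) \<longlonglongrightarrow> pmf (embed_pmf G.pii) f"
      using G.mu_lim[of f] by (simp add: P mu_def)
  next
    fix f assume "f \<in> boolfuns k"
    then show "pmf (embed_pmf G.pii) f > 0" by (simp add: P G.pii_pos)
  qed
qed

end
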